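(* Let $A$ be a group and $\phi$ a surjective, proper virtual endomorphism of $A$. Let $\Gamma\le\mathrm{Aut}(A)$ be such that $\phi$ is $\Gamma$-stable. Then the action of $A\rtimes\Gamma$ on the tree of cosets $\mathcal{T}_\phi$, given by $(a,\gamma).(a'\phi^{-n}(A))=a\gamma(a')\phi^{-n}(A)$, is faithful.
   Context: A virtual endomorphism of a group $A$ is a homomorphism $\phi$ from a finite index subgroup of $A$ to $A$. The iterated preimages $\phi^{-n}(A)$ ($n\ge 0$, with $\phi^{-0}(A)=A$) are finite index subgroups of $A$. $\phi$ is proper if $\bigcap_{n\in\mathbb{N}}\phi^{-n}(A)=\{1\}$. For $\Gamma\le\mathrm{Aut}(A)$, $\phi$ is $\Gamma$-stable if $\gamma(\phi^{-n}(A))=\phi^{-n}(A)$ for all $\gamma\in\Gamma$ and all $n\in\mathbb{N}$. The tree of cosets $\mathcal{T}_\phi$ has vertex set $\coprod_{n\ge0}A/\phi^{-n}(A)$ (root $A$) and an edge from $a\phi^{-n}(A)$ to $a\phi^{-(n+1)}(A)$ for each $n\ge 0$ and $a\in A$. $A\rtimes\Gamma$ is the semidirect product for the natural action of $\Gamma$ on $A$; when $\phi$ is $\Gamma$-stable the displayed formula defines an action by tree automorphisms. *)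

theory Defs
  imports "HOL-Algebra.Algebra"
begin

definition virtual_endo :: "('a, 'b) monoid_scheme \<Rightarrow> 'a set \<Rightarrow> ('a \<Rightarrow> 'a) \<Rightarrow> bool" where
  "virtual_endo A D phi \<longleftrightarrow>
     subgroup D A \<and> finite (rcosets\<^bsub>A\<^esub> D) \<and> phi \<in> hom (A\<lparr>carrier := D\<rparr>) A"

fun iter_preim :: "('a, 'b) monoid_scheme \<Rightarrow> 'a set \<Rightarrow> ('a \<Rightarrow> 'a) \<Rightarrow> nat \<Rightarrow> 'a set" where
  "iter_preim A D phi 0 = carrier A"
| "iter_preim A D phi (Suc n) = {x \<in> D. phi x \<in> iter_preim A D phi n}"

definition surjective_ve :: "('a, 'b) monoid_scheme \<Rightarrow> 'a set \<Rightarrow> ('a \<Rightarrow> 'a) \<Rightarrow> bool" where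
  "surjective_ve A D phi \<longleftrightarrow> phi ` D = carrier A"

definition proper_ve :: "('a, 'b) monoid_scheme \<Rightarrow> 'a set \<Rightarrow> ('a \<Rightarrow> 'a) \<Rightarrow> bool" where
  "proper_ve A D phi \<longleftrightarrow> (\<Inter>n. iter_preim A D phi n) = {\<one>\<^bsub>A\<^esub>}"

definition stable_ve :: "('a, 'b) monoid_scheme \<Rightarrow> 'a set \<Rightarrow> ('a \<Rightarrow> 'a) \<Rightarrow> ('a \<Rightarrow> 'a) set \<Rightarrow> bool" where
  "stable_ve A D phi \<Gamma> \<longleftrightarrow> (\<forall>\<gamma>\<in>\<Gamma>. \<forall>n. \<gamma> ` iter_preim A D phi n = iter_preim A D phi n)"

text \<open>Action of (a, gamma) in A \<rtimes> Gamma on the vertex a' phi^{-n}(A) of the tree of cosets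
  (vertex at level n represented by level n and the left coset).\<close>
definition coset_tree_act ::
  "('a, 'b) monoid_scheme \<Rightarrow> 'a set \<Rightarrow> ('a \<Rightarrow> 'a) \<Rightarrow> 'a \<times> ('a \<Rightarrow> 'a) \<Rightarrow> nat \<Rightarrow> 'a \<Rightarrow> nat \<times> 'a set" where
  "coset_tree_act A D phi g n a' =
     (n, (fst g \<otimes>\<^bsub>A\<^esub> snd g a') <#\<^bsub>A\<^esub> iter_preim A D phi n)"

definition faithful_coset_tree_action ::
  "('a, 'b) monoid_scheme \<Rightarrow> 'a set \<Rightarrow> ('a \<Rightarrow> 'a) \<Rightarrow> ('a \<Rightarrow> 'a) set \<Rightarrow> bool" where
  "faithful_coset_tree_action A D phi \<Gamma> \<longleftrightarrow>
     (\<forall>a\<in>carrier A. \<forall>\<gamma>\<in>\<Gamma>.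
        (\<forall>n. \<forall>a'\<in>carrier A. coset_tree_act A D phi (a, \<gamma>) n a' = (n, a' <#\<^bsub>A\<^esub> iter_preim A D phi n))
        \<longrightarrow> a = \<one>\<^bsub>A\<^esub> \<and> \<gamma> = \<one>\<^bsub>AutoGroup A\<^esub>)"

end

theory Submission
  imports Defs
begin

lemma iter_preim_props:
  assumes "group A" "virtual_endo A D phi"
  shows "iter_preim A D phi n \<subseteq> carrier A \<and> \<one>\<^bsub>A\<^esub> \<in> iter_preim A D phi n"
proof (induction n)
  case 0
  then show ?case using monoid.one_closed[OF group.is_monoid[OF assms(1)]] by simp
next
  case (Suc n)
  have sg: "subgroup D A" and h: "phi \<in> hom (A\<lparr>carrier := D\<rparr>) A"
    using assms(2) unfolding virtual_endo_def by auto
  have gD: "group (A\<lparr>carrier := D\<rparr>)" using subgroup.subgroup_is_group[OF sg assms(1)] .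
  have "phi \<one>\<^bsub>A\<lparr>carrier := D\<rparr>\<^esub> = \<one>\<^bsub>A\<^esub>"
    using group_hom.hom_one[of "A\<lparr>carrier := D\<rparr>" A phi] gD assms(1) h
    by (simp add: group_hom_def group_hom_axioms_def)
  then have "phi \<one>\<^bsub>A\<^esub> = \<one>\<^bsub>A\<^esub>" by simp
  then show ?case using Suc subgroup.subset[OF sg] subgroup.one_closed[OF sg] by auto
qed

lemma coset_eq_imp:
  assumes "group A" "H \<subseteq> carrier A" "\<one>\<^bsub>A\<^esub> \<in> H" "x \<in> carrier A" "y \<in> carrier A"
    "x <#\<^bsub>A\<^esub> H = y <#\<^bsub>A\<^esub> H"
  shows "inv\<^bsub>A\<^esub> y \<otimes>\<^bsub>A\<^esub> x \<in> H"
proof -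
  interpret group A by fact
  have "x \<in> x <#\<^bsub>A\<^esub> H" using assms by (metis l_coset_def r_one UN_iff singletonI)
  then have "x \<in> y <#\<^bsub>A\<^esub> H" using assms by simp
  then obtain h where hh: "h \<in> H" "x = y \<otimes>\<^bsub>A\<^esub> h" unfolding l_coset_def by auto
  then have "inv\<^bsub>A\<^esub> y \<otimes>\<^bsub>A\<^esub> x = h" using assms
    by (metis inv_solve_left' subsetD)
  then show ?thesis using hh by simp
qed

theorem lemma4p3:
  fixes A :: "('a, 'b) monoid_scheme" and D :: "'a set" and phi :: "'a \<Rightarrow> 'a"
    and \<Gamma> :: "('a \<Rightarrow> 'a) set"
  assumes "group A"
    and "virtual_endo A D phi"
    and "surjective_ve A D phi"
    and "proper_ve A D phi"
    and "subgroup \<Gamma> (AutoGroup A)"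
    and "stable_ve A D phi \<Gamma>"
  shows "faithful_coset_tree_action A D phi \<Gamma>"
  unfolding faithful_coset_tree_action_def
proof (intro ballI impI)
  fix a \<gamma>
  assume a: "a \<in> carrier A" and g: "\<gamma> \<in> \<Gamma>"
    and H: "\<forall>n. \<forall>a'\<in>carrier A. coset_tree_act A D phi (a, \<gamma>) n a' = (n, a' <#\<^bsub>A\<^esub> iter_preim A D phi n)"
  interpret group A by fact
  have gauto: "\<gamma> \<in> auto A" using subgroup.subset[OF assms(5)] g
    by (auto simp: AutoGroup_def)
  then have ghom: "\<gamma> \<in> hom A A" and gext: "\<gamma> \<in> extensional (carrier A)"
    by (auto simp: auto_def BijGroup_def Bij_def)
  have gcl: "\<gamma> x \<in> carrier A" if "x \<in> carrier A" for x using ghom that by (simp add: hom_def Pi_def)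
  have g1: "\<gamma> \<one>\<^bsub>A\<^esub> = \<one>\<^bsub>A\<^esub>"
    using ghom by (simp add: group_hom.hom_one group_hom_def group_hom_axioms_def is_group)
  have P: "iter_preim A D phi n \<subseteq> carrier A \<and> \<one>\<^bsub>A\<^esub> \<in> iter_preim A D phi n" for n
    using iter_preim_props[OF assms(1,2)] by simp
  have E: "(a \<otimes>\<^bsub>A\<^esub> \<gamma> x) <#\<^bsub>A\<^esub> iter_preim A D phi n = x <#\<^bsub>A\<^esub> iter_preim A D phi n" if "x \<in> carrier A" for x n
    using H that by (simp add: coset_tree_act_def)
  have mem: "inv\<^bsub>A\<^esub> x \<otimes>\<^bsub>A\<^esub> (a \<otimes>\<^bsub>A\<^esub> \<gamma> x) \<in> iter_preim A D phi n" if "x \<in> carrier A" for x n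
    using coset_eq_imp[OF assms(1) _ _ _ that E[OF that]] P that a gcl by auto
  have "inv\<^bsub>A\<^esub> \<one>\<^bsub>A\<^esub> \<otimes>\<^bsub>A\<^esub> (a \<otimes>\<^bsub>A\<^esub> \<gamma> \<one>\<^bsub>A\<^esub>) = a" using g1 a by simp
  then have "a \<in> (\<Inter>n. iter_preim A D phi n)" using mem[of "\<one>\<^bsub>A\<^esub>"] by auto
  then have a1: "a = \<one>\<^bsub>A\<^esub>" using assms(4) unfolding proper_ve_def by blast
  have fx: "\<gamma> x = x" if "x \<in> carrier A" for x
  proof -
    have "inv\<^bsub>A\<^esub> x \<otimes>\<^bsub>A\<^esub> \<gamma> x \<in> (\<Inter>n. iter_preim A D phi n)" using mem[OF that] a1 gcl[OF that] by simp
    then have "inv\<^bsub>A\<^esub> x \<otimes>\<^bsub>A\<^esub> \<gamma> x = \<one>\<^bsub>A\<^esub>" using assms(4) unfolding proper_ve_def by blast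
    then show ?thesis using that gcl[OF that]
    proof -
      have "\<gamma> x = (x \<otimes>\<^bsub>A\<^esub> inv\<^bsub>A\<^esub> x) \<otimes>\<^bsub>A\<^esub> \<gamma> x" using that gcl[OF that] by simp
      also have "\<dots> = x \<otimes>\<^bsub>A\<^esub> (inv\<^bsub>A\<^esub> x \<otimes>\<^bsub>A\<^esub> \<gamma> x)"
        by (rule m_assoc[OF that inv_closed[OF that] gcl[OF that]])
      finally show ?thesis using \<open>inv\<^bsub>A\<^esub> x \<otimes>\<^bsub>A\<^esub> \<gamma> x = \<one>\<^bsub>A\<^esub>\<close> that by simp
    qed
  qed
  have "\<gamma> = (\<lambda>x\<in>carrier A. x)"
  proof
    fix x show "\<gamma> x = (\<lambda>x\<in>carrier A. x) x"
      using gext fx by (cases "x \<in> carrier A") (auto simp: extensional_def)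
  qed
  then show "a = \<one>\<^bsub>A\<^esub> \<and> \<gamma> = \<one>\<^bsub>AutoGroup A\<^esub>"
    using a1 by (simp add: AutoGroup_def BijGroup_def)
qed

end
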